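(* Let $\Lambda_\infty=(r_0=0,r_1,r_2,\dots)$ be strictly increasing with $\lim_{n\to\infty}r_n=\infty$ and $\sum_{i=1}^\infty 1/r_i<\infty$. Let $0<a<1$, $n\ge1$, and let $P\in E(\Lambda_n)$ be $\mathbb{R}^s$-valued with $P'(a)\neq 0$. Then there is a constant $c>0$ depending only on $\Lambda_\infty$ and $a$ such that for all $m\ge n$, $$\bigl\|\eta_0(P,\Lambda_m,[a,1])-\eta_1(P,\Lambda_m,[a,1])\bigr\|_\infty\ \ge\ \frac{\|P'(a)\|_\infty}{c}>0 .$$
   Context: For a sequence $0=r_0<r_1<r_2<\cdots$ of reals, write $\Lambda_n=(r_0,\dots,r_n)$ and $E(\Lambda_n)=\mathrm{span}(t^{r_0}=1,t^{r_1},\dots,t^{r_n})$ (functions on $]0,\infty[$); an $\mathbb{R}^s$-valued element of $E(\Lambda_n)$ is a map $t\mapsto\sum_{k=0}^n t^{r_k}A_k$ with $A_k\in\mathbb{R}^s$. For an interval $[a,b]$ with $0<a<b$, the Chebyshev–Bernstein basis $(B^n_{0,\Lambda_n},\dots,B^n_{n,\Lambda_n})$ of $E(\Lambda_n)$ over $[a,b]$ is the unique basis of $E(\Lambda_n)$ with $\sum_{k=0}^n B^n_{k,\Lambda_n}\equiv 1$ such that, for each $k$, $B^n_{k,\Lambda_n}$ has a zero of multiplicity (exactly) $k$ at $a$ and of multiplicity $n-k$ at $b$. For $P\in E(\Lambda_n)$ and $m\ge n$, the control points $\eta_i(P,\Lambda_m,[a,b])\in\mathbb{R}^s$, $i=0,\dots,m$,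 are defined by $P(t)=\sum_{i=0}^m B^m_{i,\Lambda_m}(t)\,\eta_i(P,\Lambda_m,[a,b])$. *)

theory Defs
  imports "HOL-Analysis.Analysis"
begin

definition inE :: "(nat \<Rightarrow> real) \<Rightarrow> nat \<Rightarrow> (real \<Rightarrow> real) \<Rightarrow> bool" where
  "inE r n f \<longleftrightarrow> (\<exists>A::nat \<Rightarrow> real. \<forall>t>0. f t = (\<Sum>k\<le>n. A k * t powr r k))"

definition zero_mult :: "(real \<Rightarrow> real) \<Rightarrow> real \<Rightarrow> nat \<Rightarrow> bool" where
  "zero_mult f x k \<longleftrightarrow> (\<forall>j<k. (deriv ^^ j) f x = 0) \<and> (deriv ^^ k) f x \<noteq> 0"

definition CB_basis :: "(nat \<Rightarrow> real) \<Rightarrow> nat \<Rightarrow> real \<Rightarrow> real \<Rightarrow> (nat \<Rightarrow> real \<Rightarrow> real) \<Rightarrow> bool" where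
  "CB_basis r n a b B \<longleftrightarrow>
     (\<forall>k\<le>n. inE r n (B k)) \<and>
     (\<forall>c::nat \<Rightarrow> real. (\<forall>t>0. (\<Sum>k\<le>n. c k * B k t) = 0) \<longrightarrow> (\<forall>k\<le>n. c k = 0)) \<and>
     (\<forall>f. inE r n f \<longrightarrow> (\<exists>c::nat \<Rightarrow> real. \<forall>t>0. f t = (\<Sum>k\<le>n. c k * B k t))) \<and>
     (\<forall>t>0. (\<Sum>k\<le>n. B k t) = 1) \<and>
     (\<forall>k\<le>n. zero_mult (B k) a k \<and> zero_mult (B k) b (n - k))"

text \<open>Sup norm of a vector in R^s, vectors represented as functions on {..<s}.\<close>
definition supnorm :: "nat \<Rightarrow> (nat \<Rightarrow> real) \<Rightarrow> real" where
  "supnorm s v = Max ((\<lambda>j. \<bar>v j\<bar>) ` {..<s})"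

end

theory Submission
  imports Defs "HOL-Computational_Algebra.Polynomial"
begin


definition chain :: "(nat \<Rightarrow> real) \<Rightarrow> nat \<Rightarrow> (nat \<Rightarrow> real \<Rightarrow> real) \<Rightarrow> bool" where
 "chain \<rho> M F \<longleftrightarrow> (\<forall>y. F 0 y = 1) \<and> (\<forall>k. 1 \<le> k \<longrightarrow> k \<le> M \<longrightarrow> F k 0 = 0 \<and>
     (\<forall>y. (F k has_real_derivative \<rho> k * (F (k-1) y - F k y)) (at y)))"

lemma incr_deriv:
  fixes f f' :: "real \<Rightarrow> real"
  assumes "a \<le> b" "\<And>x. a \<le> x \<Longrightarrow> x \<le> b \<Longrightarrow> (f has_real_derivative f' x) (at x)"
    "\<And>x. a \<le> x \<Longrightarrow> x \<le> b \<Longrightarrow> f' x \<ge> 0"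
  shows "f a \<le> f b"
proof (rule DERIV_nonneg_imp_increasing_open[OF assms(1)])
  show "\<And>x. a < x \<Longrightarrow> x < b \<Longrightarrow> \<exists>y. DERIV f x :> y \<and> y \<ge> 0" using assms by force
  show "continuous_on {a..b} f"
    by (rule continuous_at_imp_continuous_on) (meson assms(2) DERIV_isCont atLeastAtMost_iff)
qed

lemma comp_lower:
  fixes u v :: "real \<Rightarrow> real" and \<rho> M y0 y :: real
  assumes der: "\<And>x. (u has_real_derivative \<rho> * (v x - u x)) (at x)"
   and "\<rho> \<ge> 0" "y0 \<le> y" "\<And>x. y0 \<le> x \<Longrightarrow> v x \<ge> M" "u y0 \<ge> M"
  shows "u y \<ge> M"
proof -
  define w where "w x = exp (\<rho>*x) * (u x - M)" for x
  have dw: "(w has_real_derivative \<rho> * exp (\<rho>*x) * (v x - M)) (at x)" for x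
  proof -
    have e: "((\<lambda>x. exp (\<rho>*x)) has_real_derivative exp(\<rho>*x)*\<rho>) (at x)"
      by (auto intro!: derivative_eq_intros)
    have d: "((\<lambda>x. u x - M) has_real_derivative \<rho>*(v x - u x)) (at x)"
      using DERIV_diff[OF der DERIV_const] by simp
    have "(w has_real_derivative (exp (\<rho>*x) * \<rho>) * (u x - M) + (\<rho> * (v x - u x)) * exp (\<rho>*x)) (at x)"
      unfolding w_def by (rule DERIV_mult[OF e d])
    then show ?thesis by (simp add: algebra_simps)
  qed
  have "w y0 \<le> w y" by (rule incr_deriv[OF assms(3) dw]) (use assms in auto)
  moreover have "w y0 \<ge> 0" using assms(5) by (simp add: w_def)
  ultimately have "0 \<le> exp(\<rho>*y)*(u y - M)" by (simp add: w_def)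
  then show ?thesis by (simp add: zero_le_mult_iff)
qed

lemma comp_upper:
  fixes u v :: "real \<Rightarrow> real" and \<rho> M y0 y :: real
  assumes der: "\<And>x. (u has_real_derivative \<rho> * (v x - u x)) (at x)"
   and "\<rho> \<ge> 0" "y0 \<le> y" "\<And>x. y0 \<le> x \<Longrightarrow> v x \<le> M" "u y0 \<le> M"
  shows "u y \<le> M"
proof -
  have d: "((\<lambda>x. - u x) has_real_derivative \<rho> * (- v x - - u x)) (at x)" for x
      using DERIV_minus[OF der[of x]] by (simp add: algebra_simps)
  have "-u y \<ge> -M"
    by (rule comp_lower[of "\<lambda>x. - u x" \<rho> "\<lambda>x. - v x" y0 y "-M", OF d]) (use assms in auto)
  then show ?thesis by simp
qed

lemma comp_strict:
  fixes u v :: "real \<Rightarrow> real" and \<rho> M y0 y :: real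
  assumes der: "\<And>x. (u has_real_derivative \<rho> * (v x - u x)) (at x)"
   and "\<rho> > 0" "y0 < y" "\<And>x. y0 \<le> x \<Longrightarrow> x \<le> y \<Longrightarrow> v x > M" "u y0 \<ge> M"
  shows "u y > M"
proof -
  define w where "w x = exp (\<rho>*x) * (u x - M)" for x
  have dw: "(w has_real_derivative \<rho> * exp (\<rho>*x) * (v x - M)) (at x)" for x
  proof -
    have e: "((\<lambda>x. exp (\<rho>*x)) has_real_derivative exp(\<rho>*x)*\<rho>) (at x)"
      by (auto intro!: derivative_eq_intros)
    have d: "((\<lambda>x. u x - M) has_real_derivative \<rho>*(v x - u x)) (at x)"
      using DERIV_diff[OF der DERIV_const] by simp
    have "(w has_real_derivative (exp (\<rho>*x) * \<rho>) * (u x - M) + (\<rho> * (v x - u x)) * exp (\<rho>*x)) (at x)"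
      unfolding w_def by (rule DERIV_mult[OF e d])
    then show ?thesis by (simp add: algebra_simps)
  qed
  have "w y0 < w y"
  proof (rule DERIV_pos_imp_increasing[OF assms(3)])
    fix x assume "y0 \<le> x" "x \<le> y"
    then have "\<rho> * exp (\<rho>*x) * (v x - M) > 0" using assms(2,4) by simp
    then show "\<exists>z. DERIV w x :> z \<and> z > 0" using dw by blast
  qed
  moreover have "w y0 \<ge> 0" using assms(5) by (simp add: w_def)
  ultimately have "0 < exp(\<rho>*y)*(u y - M)" by (simp add: w_def)
  then show ?thesis by (simp add: zero_less_mult_iff)
qed



context
  fixes \<rho> :: "nat \<Rightarrow> real" and M :: nat and F :: "nat \<Rightarrow> real \<Rightarrow> real"
  assumes ch: "chain \<rho> M F" and pos: "\<And>k. 1 \<le> k \<Longrightarrow> \<rho> k > 0"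
begin

definition ff :: "nat \<Rightarrow> real \<Rightarrow> real" where
  "ff k y = (if k = 0 then 0 else \<rho> k * (F (k-1) y - F k y))"

lemma F0: "F 0 y = 1" using ch by (simp add: chain_def)
lemma F0': "F 0 = (\<lambda>_. 1)" using F0 by auto
lemma Fk0: "1 \<le> k \<Longrightarrow> k \<le> M \<Longrightarrow> F k 0 = 0" using ch by (simp add: chain_def)

lemma dF: "k \<le> M \<Longrightarrow> (F k has_real_derivative ff k y) (at y)"
proof (cases "k = 0")
  case True then show ?thesis by (simp add: F0' ff_def)
next
  case False
  assume "k \<le> M"
  with False ch show ?thesis by (simp add: chain_def ff_def)
qed

lemma dff: "1 \<le> k \<Longrightarrow> k \<le> M \<Longrightarrow> (ff k has_real_derivative \<rho> k * (ff (k-1) y - ff k y)) (at y)"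
proof -
  assume k: "1 \<le> k" "k \<le> M"
  have "((\<lambda>y. \<rho> k * (F (k-1) y - F k y)) has_real_derivative \<rho> k * (ff (k-1) y - ff k y)) (at y)"
    using k by (intro DERIV_cmult DERIV_diff dF) auto
  moreover have "ff k = (\<lambda>y. \<rho> k * (F (k-1) y - F k y))" using k by (auto simp: ff_def)
  ultimately show ?thesis by simp
qed

lemma ff_bounds: "1 \<le> k \<Longrightarrow> k \<le> M \<Longrightarrow> 0 \<le> y \<Longrightarrow> 0 \<le> ff k y \<and> ff k y \<le> \<rho> 1"
proof (induction k arbitrary: y)
  case 0 then show ?case by simp
next
  case (Suc k)
  have r: "\<rho> (Suc k) \<ge> 0" using pos[of "Suc k"] by simp
  show ?case
  proof (cases "k = 0")
    case True
    have v: "ff 0 x = 0" for x by (simp add: ff_def)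
    have i: "ff 1 0 = \<rho> 1" using Fk0[of 1] Suc.prems F0 by (simp add: ff_def)
    have "0 \<le> ff 1 y"
      by (rule comp_lower[of "ff 1" "\<rho> 1" "ff 0" 0]) (use dff[of 1] Suc.prems v i pos[of 1] in auto)
    moreover have "ff 1 y \<le> \<rho> 1"
      by (rule comp_upper[of "ff 1" "\<rho> 1" "ff 0" 0]) (use dff[of 1] Suc.prems v i pos[of 1] in auto)
    ultimately show ?thesis using True by simp
  next
    case False
    have i: "ff (Suc k) 0 = 0" using Fk0[of "Suc k"] Fk0[of k] Suc.prems False by (simp add: ff_def)
    have d: "\<And>x. (ff (Suc k) has_real_derivative \<rho> (Suc k) * (ff k x - ff (Suc k) x)) (at x)"
      using dff[of "Suc k"] Suc.prems by simp
    have "0 \<le> ff (Suc k) y"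
      by (rule comp_lower[of "ff (Suc k)" "\<rho> (Suc k)" "ff k" 0, OF d]) (use Suc False r i in auto)
    moreover have "ff (Suc k) y \<le> \<rho> 1"
      by (rule comp_upper[of "ff (Suc k)" "\<rho> (Suc k)" "ff k" 0, OF d]) (use Suc False r i pos[of 1] in auto)
    ultimately show ?thesis by simp
  qed
qed

lemma f_bounds: "1 \<le> k \<Longrightarrow> k \<le> M \<Longrightarrow> 0 \<le> y \<Longrightarrow>
   0 \<le> \<rho> k * (F (k-1) y - F k y) \<and> \<rho> k * (F (k-1) y - F k y) \<le> \<rho> 1"
  using ff_bounds[of k y] by (simp add: ff_def)

lemma ff_nonneg: "k \<le> M \<Longrightarrow> 0 \<le> y \<Longrightarrow> 0 \<le> ff k y"
  using ff_bounds[of k y] by (cases "k = 0") (auto simp: ff_def)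

lemma F_mono_y: "k \<le> M \<Longrightarrow> 0 \<le> y \<Longrightarrow> y \<le> z \<Longrightarrow> F k y \<le> F k z"
  by (rule incr_deriv[of y z "F k" "ff k"]) (use dF ff_nonneg in auto)

lemma F_nonneg: "k \<le> M \<Longrightarrow> 0 \<le> y \<Longrightarrow> 0 \<le> F k y"
proof (cases "k = 0")
  case True then show ?thesis by (simp add: F0)
next
  case False
  assume "k \<le> M" "0 \<le> y"
  then have "F k 0 \<le> F k y" using F_mono_y by auto
  with Fk0[of k] False \<open>k \<le> M\<close> show ?thesis by simp
qed

lemma F_mono_k1: "1 \<le> k \<Longrightarrow> k \<le> M \<Longrightarrow> 0 \<le> y \<Longrightarrow> F k y \<le> F (k-1) y"
proof -
  assume k: "1 \<le> k" "k \<le> M" "0 \<le> y"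
  have "0 \<le> ff k y" using ff_nonneg k by simp
  then have "0 \<le> \<rho> k * (F (k-1) y - F k y)" using k by (simp add: ff_def)
  with pos[of k] k show ?thesis by (simp add: zero_le_mult_iff)
qed

lemma F_mono_k: "j \<le> k \<Longrightarrow> k \<le> M \<Longrightarrow> 0 \<le> y \<Longrightarrow> F k y \<le> F j y"
proof (induction k)
  case 0 then show ?case by simp
next
  case (Suc k)
  show ?case
  proof (cases "j = Suc k")
    case True then show ?thesis by simp
  next
    case False
    then have "F k y \<le> F j y" using Suc by simp
    moreover have "F (Suc k) y \<le> F k y" using F_mono_k1[of "Suc k" y] Suc.prems by simp
    ultimately show ?thesis by simp
  qed
qed

lemma F_le1: "k \<le> M \<Longrightarrow> 0 \<le> y \<Longrightarrow> F k y \<le> 1"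
  using F_mono_k[of 0 k y] F0 by simp

lemma F_pos: "k \<le> M \<Longrightarrow> 0 < y \<Longrightarrow> 0 < F k y"
proof (induction k arbitrary: y)
  case 0 then show ?case by (simp add: F0)
next
  case (Suc k)
  have d: "\<And>x. (F (Suc k) has_real_derivative \<rho> (Suc k) * (F k x - F (Suc k) x)) (at x)"
  proof -
    have "\<forall>y. (F (Suc k) has_real_derivative \<rho> (Suc k) * (F (Suc k - 1) y - F (Suc k) y)) (at y)"
      using ch Suc.prems unfolding chain_def by (metis Suc_le_mono le0 One_nat_def)
    then show "\<And>x. (F (Suc k) has_real_derivative \<rho> (Suc k) * (F k x - F (Suc k) x)) (at x)" by simp
  qed
  show ?case
    by (rule comp_strict[of "F (Suc k)" "\<rho> (Suc k)" "F k" "y/2", OF d])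
       (use Suc pos[of "Suc k"] F_nonneg[of "Suc k" "y/2"] in auto)
qed

lemma markov:
  assumes "j \<le> M" "0 \<le> x"
  shows "x * (1 - F j x) \<le> (\<Sum>k=1..j. 1 / \<rho> k)"
proof -
  define H where "H z = (\<Sum>k=1..j. F k z / \<rho> k)" for z
  define Z where "Z z = H z - z * (1 - F j z)" for z
  have tel: "(\<Sum>k=1..j. F (k-1) z - F k z) = F 0 z - F j z" for z
  proof (induction j)
    case 0 then show ?case by simp
  next
    case (Suc j) then show ?case by simp
  qed
  have dH: "(H has_real_derivative (\<Sum>k=1..j. ff k z / \<rho> k)) (at z)" for z
    unfolding H_def by (intro DERIV_sum DERIV_cdivide dF) (use assms in auto)
  have "(\<Sum>k=1..j. ff k z / \<rho> k) = (\<Sum>k=1..j. F (k-1) z - F k z)" for z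
  proof (rule sum.cong)
    fix k assume "k \<in> {1..j}"
    then have "\<rho> k \<noteq> 0" using pos by force
    with \<open>k \<in> {1..j}\<close> show "ff k z / \<rho> k = F (k-1) z - F k z" by (simp add: ff_def)
  qed simp
  then have dH': "(H has_real_derivative 1 - F j z) (at z)" for z
    using dH[of z] tel[of z] F0 by simp
  have dZ0: "(Z has_real_derivative (1 - F j z) - (1 * (1 - F j z) + (0 - ff j z) * z)) (at z)" for z
    unfolding Z_def
    by (intro DERIV_diff dH' DERIV_mult DERIV_ident DERIV_const dF) (use assms in auto)
  have "Z 0 \<le> Z x"
    by (rule incr_deriv[OF assms(2) dZ0]) (use ff_nonneg assms in auto)
  moreover have "Z 0 = 0"
    unfolding Z_def H_def using assms(1) by (auto intro!: sum.neutral simp: Fk0)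
  moreover have "H x \<le> (\<Sum>k=1..j. 1 / \<rho> k)"
    unfolding H_def
  proof (rule sum_mono)
    fix k assume k: "k \<in> {1..j}"
    then have "F k x \<le> 1" "\<rho> k > 0" using F_le1 pos assms by auto
    then show "F k x / \<rho> k \<le> 1 / \<rho> k" by (simp add: divide_right_mono)
  qed
  ultimately show ?thesis by (simp add: Z_def)
qed

end



lemma chain_zero:
  fixes H :: "nat \<Rightarrow> real \<Rightarrow> real" and \<rho> :: "nat \<Rightarrow> real"
  assumes h0: "\<And>y. H 0 y = 0" and hk0: "\<And>k. 1 \<le> k \<Longrightarrow> k \<le> M \<Longrightarrow> H k 0 = 0"
    and hd: "\<And>k y. 1 \<le> k \<Longrightarrow> k \<le> M \<Longrightarrow> (H k has_real_derivative \<rho> k * (H (k-1) y - H k y)) (at y)"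
  shows "k \<le> M \<Longrightarrow> H k y = 0"
proof (induction k arbitrary: y)
  case 0 then show ?case by (simp add: h0)
next
  case (Suc k)
  define w where "w x = exp (\<rho> (Suc k) * x) * H (Suc k) x" for x
  have dw: "(w has_real_derivative 0) (at x)" for x
  proof -
    have e: "((\<lambda>x. exp (\<rho> (Suc k)*x)) has_real_derivative exp(\<rho> (Suc k)*x)*\<rho> (Suc k)) (at x)"
      by (auto intro!: derivative_eq_intros)
    have d: "(H (Suc k) has_real_derivative \<rho> (Suc k) * (H k x - H (Suc k) x)) (at x)"
      using hd[of "Suc k" x] Suc.prems by simp
    have "(w has_real_derivative (exp (\<rho> (Suc k)*x)*\<rho> (Suc k)) * H (Suc k) x + (\<rho> (Suc k) * (H k x - H (Suc k) x)) * exp (\<rho> (Suc k)*x)) (at x)"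
      unfolding w_def by (rule DERIV_mult[OF e d])
    moreover have "H k x = 0" using Suc by simp
    ultimately show ?thesis by (simp add: algebra_simps)
  qed
  have "w y = w 0" by (rule DERIV_isconst_all) (use dw in auto)
  then show ?case using hk0[of "Suc k"] Suc.prems by (simp add: w_def)
qed

fun coef :: "(nat \<Rightarrow> real) \<Rightarrow> nat \<Rightarrow> nat \<Rightarrow> real" where
  "coef \<rho> 0 j = (if j = 0 then 1 else 0)"
| "coef \<rho> (Suc k) j = (if j \<le> k then coef \<rho> k j * \<rho> (Suc k) / (\<rho> (Suc k) - \<rho> j)
     else if j = Suc k then - (\<Sum>i\<le>k. coef \<rho> k i * \<rho> (Suc k) / (\<rho> (Suc k) - \<rho> i)) else 0)"

definition Fx :: "(nat \<Rightarrow> real) \<Rightarrow> nat \<Rightarrow> real \<Rightarrow> real" where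
  "Fx \<rho> k y = (\<Sum>j\<le>k. coef \<rho> k j * exp (- \<rho> j * y))"

lemma dFx: "(Fx \<rho> k has_real_derivative (\<Sum>j\<le>k. coef \<rho> k j * (- \<rho> j * exp (- \<rho> j * y)))) (at y)"
  unfolding Fx_def by (auto intro!: derivative_eq_intros sum.cong simp: algebra_simps)

lemma Fx_chain:
  assumes inj: "inj \<rho>" and r0: "\<rho> 0 = 0"
  shows "chain \<rho> M (Fx \<rho>)"
proof -
  have key: "(\<Sum>j\<le>Suc k. coef \<rho> (Suc k) j * (\<rho> (Suc k) - \<rho> j) * exp (- \<rho> j * y)) = \<rho> (Suc k) * Fx \<rho> k y" for k y
  proof -
    have "(\<Sum>j\<le>Suc k. coef \<rho> (Suc k) j * (\<rho> (Suc k) - \<rho> j) * exp (- \<rho> j * y))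
        = (\<Sum>j\<le>k. coef \<rho> (Suc k) j * (\<rho> (Suc k) - \<rho> j) * exp (- \<rho> j * y))" by simp
    also have "\<dots> = (\<Sum>j\<le>k. \<rho> (Suc k) * (coef \<rho> k j * exp (- \<rho> j * y)))"
    proof (rule sum.cong)
      fix j assume "j \<in> {..k}"
      then have "\<rho> (Suc k) \<noteq> \<rho> j" using inj by (auto dest: injD)
      with \<open>j \<in> {..k}\<close> show "coef \<rho> (Suc k) j * (\<rho> (Suc k) - \<rho> j) * exp (- \<rho> j * y) = \<rho> (Suc k) * (coef \<rho> k j * exp (- \<rho> j * y))"
        by (simp add: field_simps)
    qed simp
    also have "\<dots> = \<rho> (Suc k) * Fx \<rho> k y" by (simp add: Fx_def sum_distrib_left)
    finally show ?thesis .
  qed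
  have der: "(Fx \<rho> k has_real_derivative \<rho> k * (Fx \<rho> (k-1) y - Fx \<rho> k y)) (at y)" if "1 \<le> k" for k y
  proof -
    obtain k' where k: "k = Suc k'" using \<open>1 \<le> k\<close> by (cases k) auto
    have "(\<Sum>j\<le>k. coef \<rho> k j * (- \<rho> j * exp (- \<rho> j * y)))
        = (\<Sum>j\<le>k. coef \<rho> k j * (\<rho> k - \<rho> j) * exp (- \<rho> j * y)) - \<rho> k * Fx \<rho> k y"
      by (simp add: Fx_def sum_distrib_left sum_subtractf[symmetric] algebra_simps)
    also have "\<dots> = \<rho> k * (Fx \<rho> (k-1) y - Fx \<rho> k y)" using key[of k' y] k by (simp add: algebra_simps)
    finally show ?thesis using dFx[of \<rho> k y] by simp
  qed
  have z: "Fx \<rho> k 0 = 0" if "1 \<le> k" for k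
  proof -
    obtain k' where k: "k = Suc k'" using \<open>1 \<le> k\<close> by (cases k) auto
    show ?thesis unfolding Fx_def k by simp
  qed
  have f0: "Fx \<rho> 0 y = 1" for y by (simp add: Fx_def r0)
  show ?thesis unfolding chain_def using der z f0 by blast
qed



lemma sum_shift1: "(\<Sum>k=1..j. g k) = (\<Sum>i<j. g (Suc i :: nat)) " for g :: "nat \<Rightarrow> real"
  by (induction j) auto

lemma lowerF:
  fixes r :: "nat \<Rightarrow> real" and y :: real
  assumes r0: "r 0 = 0" and sm: "strict_mono r" and summ: "summable (\<lambda>i. 1 / r (Suc i))" and y: "0 < y"
  shows "\<exists>L>0. \<forall>m. L \<le> Fx r m y"
proof -
  have pos: "\<And>k. 1 \<le> k \<Longrightarrow> r k > 0" using sm r0 by (metis strict_monoD less_le_trans zero_less_one leI not_le order_le_less)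
  have ch: "chain r M (Fx r)" for M using Fx_chain[OF strict_mono_imp_inj_on[OF sm] r0] by simp
  obtain N where N: "norm (\<Sum>i. 1 / r (Suc (i + N))) < y/4"
    using suminf_exist_split[of "y/4" "\<lambda>i. 1 / r (Suc i)"] summ y by auto
  define \<rho>' where "\<rho>' k = (if k = 0 then 0 else r (N + k))" for k
  have sm': "strict_mono \<rho>'"
  proof (rule strict_mono_Suc_iff[THEN iffD2], intro allI)
    fix k show "\<rho>' k < \<rho>' (Suc k)"
      using pos[of "N + 1"] sm by (cases "k = 0") (auto simp: \<rho>'_def strict_mono_def)
  qed
  have pos': "\<And>k. 1 \<le> k \<Longrightarrow> \<rho>' k > 0" using pos by (simp add: \<rho>'_def)
  have ch': "chain \<rho>' M (Fx \<rho>')" for M using Fx_chain[OF strict_mono_imp_inj_on[OF sm']] by (simp add: \<rho>'_def)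
  define y0 where "y0 = y / 2"
  have y0: "0 < y0" using y by (simp add: y0_def)
  define q where "q = Fx r N y0"
  have q: "0 < q" unfolding q_def using F_pos[OF ch[of N] pos, where k=N and y=y0] y0 by simp
  have cmp: "y0 \<le> z \<Longrightarrow> q * Fx \<rho>' j (z - y0) \<le> Fx r (N + j) z" for j z
  proof (induction j arbitrary: z)
    case 0
    have "Fx \<rho>' 0 (z - y0) = 1" using F0[OF ch'[of 0] pos'] by blast
    then show ?case using F_mono_y[OF ch[of N] pos, where k=N and y=y0 and z=z] 0 y0 by (simp add: q_def)
  next
    case (Suc j)
    define u where "u z = Fx r (N + Suc j) z - q * Fx \<rho>' (Suc j) (z - y0)" for z
    define v where "v z = Fx r (N + j) z - q * Fx \<rho>' j (z - y0)" for z
    have du: "(u has_real_derivative r (N + Suc j) * (v x - u x)) (at x)" for x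
    proof -
      have d1: "(Fx r (N + Suc j) has_real_derivative r (N + Suc j) * (Fx r (N + Suc j - 1) x - Fx r (N + Suc j) x)) (at x)"
        using ch[of "N + Suc j"] unfolding chain_def by auto
      have d2: "(Fx \<rho>' (Suc j) has_real_derivative \<rho>' (Suc j) * (Fx \<rho>' (Suc j - 1) (x - y0) - Fx \<rho>' (Suc j) (x - y0))) (at (x - y0))"
        using ch'[of "Suc j"] unfolding chain_def by auto
      have d3: "((\<lambda>x. x - y0) has_real_derivative 1) (at x)" by (auto intro!: derivative_eq_intros)
      have "(u has_real_derivative r (N + Suc j) * (Fx r (N + Suc j - 1) x - Fx r (N + Suc j) x)
           - q * (\<rho>' (Suc j) * (Fx \<rho>' (Suc j - 1) (x - y0) - Fx \<rho>' (Suc j) (x - y0)) * 1)) (at x)"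
        unfolding u_def by (intro DERIV_diff d1 DERIV_cmult DERIV_chain2[OF d2 d3])
      then show ?thesis by (simp add: u_def v_def \<rho>'_def algebra_simps)
    qed
    have "0 \<le> u z"
    proof (rule comp_lower[of u "r (N + Suc j)" v y0, OF du])
      show "0 \<le> r (N + Suc j)" using pos[of "N + Suc j"] by simp
      show "y0 \<le> z" by fact
      show "\<And>x. y0 \<le> x \<Longrightarrow> 0 \<le> v x" using Suc.IH by (simp add: v_def)
      have "Fx \<rho>' (Suc j) 0 = 0" using ch'[of "Suc j"] unfolding chain_def by auto
      then show "0 \<le> u y0" using F_nonneg[OF ch[of "N + Suc j"] pos, where k="N + Suc j" and y=y0] y0 by (simp add: u_def)
    qed
    then show ?case by (simp add: u_def)
  qed
  have half: "1/2 \<le> Fx \<rho>' j y0" for j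
  proof -
    have "y0 * (1 - Fx \<rho>' j y0) \<le> (\<Sum>k=1..j. 1 / \<rho>' k)"
      using markov[OF ch'[of j] pos', where j=j and x=y0] y0 by simp
    also have "\<dots> = (\<Sum>i<j. 1 / \<rho>' (Suc i))" by (rule sum_shift1)
    also have "\<dots> = (\<Sum>i<j. 1 / r (Suc (i + N)))" by (simp add: \<rho>'_def add.commute)
    also have "\<dots> \<le> (\<Sum>i. 1 / r (Suc (i + N)))"
    proof (rule sum_le_suminf)
      show "summable (\<lambda>i. 1 / r (Suc (i + N)))"
        using summable_ignore_initial_segment[OF summ, of N] by simp
      show "\<And>n. n \<in> - {..<j} \<Longrightarrow> 0 \<le> 1 / r (Suc (n + N))" using pos by (simp add: less_imp_le)
    qed simp
    also have "\<dots> < y/4" using N by simp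
    finally have "y0 * (1 - Fx \<rho>' j y0) < y0 / 2" by (simp add: y0_def)
    then show ?thesis using y0 by (simp add: algebra_simps)
  qed
  have "\<forall>m. q/2 \<le> Fx r m y"
  proof
    fix m
    show "q/2 \<le> Fx r m y"
    proof (cases "m \<le> N")
      case True
      have "Fx r N y \<le> Fx r m y" using F_mono_k[OF ch[of N] pos, where j=m and k=N and y=y] True y by simp
      moreover have "q \<le> Fx r N y" using F_mono_y[OF ch[of N] pos, where k=N and y=y0 and z=y] y0 by (simp add: q_def y0_def)
      ultimately show ?thesis using q by simp
    next
      case False
      then obtain j where m: "m = N + j" by (metis le_add_diff_inverse nat_le_linear)
      have "q * Fx \<rho>' j (y - y0) \<le> Fx r m y" using cmp[of y j] m y by (simp add: y0_def)
      moreover have "y - y0 = y0" by (simp add: y0_def)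
      moreover have "q * (1/2) \<le> q * Fx \<rho>' j y0" using half[of j] q by (intro mult_left_mono) auto
      ultimately show ?thesis by simp
    qed
  qed
  then show ?thesis using q by (intro exI[of _ "q/2"]) auto
qed



definition pf :: "real \<Rightarrow> nat \<Rightarrow> real" where "pf x p = (\<Prod>i<p. x - real i)"

fun ffp :: "nat \<Rightarrow> real poly" where
  "ffp 0 = 1"
| "ffp (Suc p) = ffp p * [:- real p, 1:]"

lemma ffp_props: "poly (ffp p) x = pf x p \<and> degree (ffp p) = p \<and> lead_coeff (ffp p) = 1"
proof (induction p)
  case 0 then show ?case by (simp add: pf_def)
next
  case (Suc p)
  have nz: "ffp p \<noteq> 0" using Suc by auto
  have e: "degree (ffp p * [:-real p,1:]) = degree (ffp p) + degree [:-real p, 1:]"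
    by (rule degree_mult_eq) (use nz in auto)
  have eq: "ffp (Suc p) = ffp p * [:-real p,1:]" by simp
  have "degree (ffp (Suc p)) = Suc p" unfolding eq e using Suc by simp
  moreover have l1: "lead_coeff (ffp p * [:-real p,1:]) = lead_coeff (ffp p) * lead_coeff [:-real p,1:]"
    by (rule lead_coeff_mult)
  have l2: "lead_coeff [:-real p,(1::real):] = 1" by simp
  have "lead_coeff (ffp (Suc p)) = 1" unfolding eq using l1 l2 Suc by (metis mult_1_right)
  moreover have "poly (ffp (Suc p)) x = pf x (Suc p)" unfolding eq using Suc by (simp add: pf_def algebra_simps)
  ultimately show ?case by blast
qed

declare ffp.simps[simp del]

lemma span_poly:
  fixes A :: "nat \<Rightarrow> real" and r :: "nat \<Rightarrow> real"
  assumes mom: "\<And>p. p < m \<Longrightarrow> (\<Sum>k\<le>n. A k * pf (r k) p) = 0"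
  shows "degree q \<le> d \<Longrightarrow> d < m \<Longrightarrow> (\<Sum>k\<le>n. A k * poly q (r k)) = 0"
proof (induction d arbitrary: q)
  case 0
  then have "q = [:coeff q 0:]" by (metis le_zero_eq degree_0_id)
  then have "poly q x = coeff q 0 * pf x 0" for x by (metis pf_def poly_pCons mult.right_neutral lessThan_0 prod.empty mult_zero_right add.right_neutral poly_0)
  then have "(\<Sum>k\<le>n. A k * poly q (r k)) = coeff q 0 * (\<Sum>k\<le>n. A k * pf (r k) 0)"
    by (simp add: sum_distrib_left algebra_simps)
  then show ?case using mom[of 0] 0 by simp
next
  case (Suc d)
  define q' where "q' = q - smult (coeff q (Suc d)) (ffp (Suc d))"
  have fp: "degree (ffp (Suc d)) = Suc d" "coeff (ffp (Suc d)) (Suc d) = 1" using ffp_props[of "Suc d" 0] by metis+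
  have "\<forall>i>d. coeff q' i = 0"
  proof (intro allI impI)
    fix i assume "d < i"
    show "coeff q' i = 0"
    proof (cases "i = Suc d")
      case True then show ?thesis using fp by (simp add: q'_def)
    next
      case False
      then have "i > Suc d" using \<open>d < i\<close> by simp
      then have "coeff q i = 0" "coeff (ffp (Suc d)) i = 0" using Suc.prems fp
        by (auto intro: coeff_eq_0)
      then show ?thesis by (simp add: q'_def)
    qed
  qed
  then have "degree q' \<le> d" by (rule degree_le)
  then have z: "(\<Sum>k\<le>n. A k * poly q' (r k)) = 0" using Suc by simp
  have "poly q x = poly q' x + coeff q (Suc d) * pf x (Suc d)" for x
    using ffp_props[of "Suc d" x] by (simp add: q'_def)
  then have "(\<Sum>k\<le>n. A k * poly q (r k)) = (\<Sum>k\<le>n. A k * poly q' (r k)) + coeff q (Suc d) * (\<Sum>k\<le>n. A k * pf (r k) (Suc d))"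
    by (simp add: sum_distrib_left sum.distrib algebra_simps)
  then show ?case using z mom[of "Suc d"] Suc.prems by simp
qed

lemma iter_deriv:
  fixes f :: "real \<Rightarrow> real"
  assumes f: "\<And>t. t > 0 \<Longrightarrow> f t = (\<Sum>k\<le>n. A k * t powr r k)"
  shows "t > 0 \<Longrightarrow> (deriv ^^ p) f t = (\<Sum>k\<le>n. A k * pf (r k) p * t powr (r k - real p))"
proof (induction p arbitrary: t)
  case 0 then show ?case using f by (simp add: pf_def)
next
  case (Suc p)
  define h where "h t = (\<Sum>k\<le>n. A k * pf (r k) p * t powr (r k - real p))" for t
  have dh: "(h has_real_derivative (\<Sum>k\<le>n. A k * pf (r k) p * ((r k - real p) * t powr (r k - real p - 1)))) (at t)"
    unfolding h_def using Suc.prems by (intro DERIV_sum DERIV_cmult has_real_derivative_powr) auto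
  have "((deriv ^^ p) f has_real_derivative (\<Sum>k\<le>n. A k * pf (r k) p * ((r k - real p) * t powr (r k - real p - 1)))) (at t)"
    by (rule has_field_derivative_transform_within_open[OF dh, of "{0<..}"]) (use Suc in \<open>auto simp: h_def\<close>)
  then have "deriv ((deriv ^^ p) f) t = (\<Sum>k\<le>n. A k * pf (r k) p * ((r k - real p) * t powr (r k - real p - 1)))"
    by (rule DERIV_imp_deriv)
  also have "\<dots> = (\<Sum>k\<le>n. A k * pf (r k) (Suc p) * t powr (r k - real (Suc p)))"
    by (rule sum.cong) (auto simp: pf_def algebra_simps)
  finally show ?case by simp
qed

lemma inE_deriv:
  assumes "inE r n f" "t > 0"
  shows "(f has_real_derivative deriv f t) (at t)"
proof -
  obtain A where f: "\<And>t. t > 0 \<Longrightarrow> f t = (\<Sum>k\<le>n. A k * t powr r k)" using assms(1) by (auto simp: inE_def)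
  have dh: "((\<lambda>t. \<Sum>k\<le>n. A k * t powr r k) has_real_derivative (\<Sum>k\<le>n. A k * (r k * t powr (r k - 1)))) (at t)"
    using assms(2) by (intro DERIV_sum DERIV_cmult has_real_derivative_powr) auto
  have "(f has_real_derivative (\<Sum>k\<le>n. A k * (r k * t powr (r k - 1)))) (at t)"
    by (rule has_field_derivative_transform_within_open[OF dh, of "{0<..}"]) (use assms f in auto)
  then show ?thesis using DERIV_imp_deriv by metis
qed



lemma B0_bound:
  fixes r :: "nat \<Rightarrow> real" and a L :: real and m :: nat and f :: "real \<Rightarrow> real"
  assumes r0: "r 0 = 0" and sm: "strict_mono r" and a: "0 < a" "a < 1"
    and L: "0 < L" "L \<le> Fx r m (- ln a)"
    and m: "1 \<le> m" and fE: "inE r m f" and fz: "\<And>j. j < m \<Longrightarrow> (deriv ^^ j) f 1 = 0"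
    and fa: "f a = 1"
  shows "\<bar>deriv f a\<bar> \<le> r 1 / (a * L)"
proof -
  have pos: "\<And>k. 1 \<le> k \<Longrightarrow> r k > 0" using sm r0 by (metis strict_monoD less_le_trans zero_less_one leI not_le order_le_less)
  have ch: "chain r M (Fx r)" for M using Fx_chain[OF strict_mono_imp_inj_on[OF sm] r0] by simp
  obtain A where fA: "\<And>t. t > 0 \<Longrightarrow> f t = (\<Sum>k\<le>m. A k * t powr r k)" using fE by (auto simp: inE_def)
  have mom: "(\<Sum>k\<le>m. A k * pf (r k) p) = 0" if "p < m" for p
    using iter_deriv[OF fA, of 1 p] fz[OF that] by simp
  define cc where "cc k j = (\<Prod>i\<in>{k<..m}. 1 - r j / r i)" for k j
  define G where "G k y = (\<Sum>j\<le>m. A j * cc k j * exp (- r j * y))" for k y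
  obtain m' where m': "m = Suc m'" using m by (cases m) auto
  have G0: "G 0 y = A 0" for y
  proof -
    have "cc 0 (Suc j) = 0" if "j \<le> m'" for j
    proof -
      have "Suc j \<in> {0<..m}" using that m' by simp
      moreover have "1 - r (Suc j) / r (Suc j) = 0" using pos[of "Suc j"] by simp
      ultimately show ?thesis unfolding cc_def by (metis (no_types, lifting) finite_greaterThanAtMost prod_zero)
    qed
    moreover have "cc 0 0 = 1" unfolding cc_def by (simp add: r0)
    ultimately show ?thesis unfolding G_def m' sum.atMost_Suc_shift by (simp add: r0)
  qed
  have Gk0: "G k 0 = 0" if "1 \<le> k" "k \<le> m" for k
  proof -
    define Q where "Q = (\<Prod>i\<in>{k<..m}. [:1, - 1 / r i:])"
    have pQ: "poly Q x = (\<Prod>i\<in>{k<..m}. 1 - x / r i)" for x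
      unfolding Q_def poly_prod by (simp add: algebra_simps)
    have "degree Q \<le> sum (degree \<circ> (\<lambda>i. [:1, - 1 / r i:])) {k<..m}"
      unfolding Q_def by (rule degree_prod_sum_le) simp
    also have "\<dots> \<le> sum (\<lambda>i. 1) {k<..m}" by (rule sum_mono) auto
    also have "\<dots> = m - k" by simp
    finally have dQ: "degree Q \<le> m - 1" using that by simp
    have "(\<Sum>k\<le>m. A k * poly Q (r k)) = 0"
      by (rule span_poly[where A=A and r=r and m=m and n=m, OF mom dQ]) (use m in auto)
    then show ?thesis unfolding G_def cc_def pQ by simp
  qed
  have ccrec: "r k * (cc (k-1) j - cc k j) = - r j * cc k j" if "1 \<le> k" "k \<le> m" for k j
  proof -
    have "{k-1<..m} = insert k {k<..m}" using that by auto
    then have "cc (k-1) j = (1 - r j / r k) * cc k j" unfolding cc_def by simp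
    then show ?thesis using pos[OF that(1)] by (simp add: field_simps)
  qed
  have dGe: "(G k has_real_derivative (\<Sum>j\<le>m. A j * cc k j * (- r j * exp (- r j * y)))) (at y)" for k y
    unfolding G_def by (auto intro!: derivative_eq_intros sum.cong simp: algebra_simps)
  have dGv: "(\<Sum>j\<le>m. A j * cc k j * (- r j * exp (- r j * y))) = r k * (G (k-1) y - G k y)"
    if "1 \<le> k" "k \<le> m" for k y
  proof -
    have "r k * (G (k-1) y - G k y) = (\<Sum>j\<le>m. A j * (r k * (cc (k-1) j - cc k j)) * exp (- r j * y))"
      unfolding G_def by (simp add: sum_distrib_left sum_subtractf[symmetric] algebra_simps)
    also have "\<dots> = (\<Sum>j\<le>m. A j * cc k j * (- r j * exp (- r j * y)))"
    proof (rule sum.cong[OF refl])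
      fix j show "A j * (r k * (cc (k - 1) j - cc k j)) * exp (- r j * y) = A j * cc k j * (- r j * exp (- r j * y))"
        by (subst ccrec[OF that]) (simp add: algebra_simps)
    qed
    finally show ?thesis by simp
  qed
  define H where "H k y = G k y - A 0 * Fx r k y" for k y
  have Hz: "H k y = 0" if "k \<le> m" for k y
  proof (rule chain_zero[of H m r, OF _ _ _ that])
    show "\<And>y. H 0 y = 0" using G0 F0[OF ch[of m] pos] by (simp add: H_def)
    show "\<And>k. 1 \<le> k \<Longrightarrow> k \<le> m \<Longrightarrow> H k 0 = 0" using Gk0 Fk0[OF ch[of m] pos] by (simp add: H_def)
    fix k y assume k: "1 \<le> k" "k \<le> m"
    have d1: "(G k has_real_derivative r k * (G (k-1) y - G k y)) (at y)" using dGe[of k y] dGv[OF k, of y] by simp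
    have d2: "(Fx r k has_real_derivative r k * (Fx r (k-1) y - Fx r k y)) (at y)"
      using ch[of m] k unfolding chain_def by auto
    have "(H k has_real_derivative r k * (G (k-1) y - G k y) - A 0 * (r k * (Fx r (k-1) y - Fx r k y))) (at y)"
      unfolding H_def by (intro DERIV_diff DERIV_cmult d1 d2)
    then show "(H k has_real_derivative r k * (H (k-1) y - H k y)) (at y)" by (simp add: H_def algebra_simps)
  qed
  define ya where "ya = - ln a"
  have ya: "0 \<le> ya" using a by (simp add: ya_def)
  have ccm: "cc m j = 1" for j by (simp add: cc_def)
  have ex: "exp (- r j * ya) = a powr r j" for j using a by (simp add: ya_def powr_def)
  have ex2: "exp (- (ya * r j)) = a powr r j" for j using ex[of j] by (simp add: mult.commute)
  have "f a = G m ya" using fA[OF a(1)] ex by (simp add: G_def ccm)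
  then have A0F: "A 0 * Fx r m ya = 1" using Hz[of m ya] fa by (simp add: H_def)
  have "deriv f a = (\<Sum>k\<le>m. A k * pf (r k) 1 * a powr (r k - 1))"
    using iter_deriv[OF fA, of a 1] a by simp
  also have "\<dots> = (\<Sum>k\<le>m. A k * r k * a powr r k) / a"
    using a by (simp add: pf_def powr_diff sum_divide_distrib)
  also have "(\<Sum>k\<le>m. A k * r k * a powr r k) = - (\<Sum>j\<le>m. A j * cc m j * (- r j * exp (- r j * ya)))"
    by (simp add: ccm ex ex2 sum_negf[symmetric] algebra_simps)
  also have "(\<Sum>j\<le>m. A j * cc m j * (- r j * exp (- r j * ya))) = r m * (G (m-1) ya - G m ya)"
    using dGv[of m ya] m by simp
  also have "\<dots> = A 0 * (r m * (Fx r (m-1) ya - Fx r m ya))"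
    using Hz[of m ya] Hz[of "m-1" ya] by (simp add: H_def algebra_simps)
  finally have df: "deriv f a = - (A 0 * (r m * (Fx r (m-1) ya - Fx r m ya))) / a" .
  have bnd: "0 \<le> r m * (Fx r (m-1) ya - Fx r m ya) \<and> r m * (Fx r (m-1) ya - Fx r m ya) \<le> r 1"
    by (rule f_bounds[OF ch[of m] pos, where k=m and y=ya]) (use m ya in auto)
  have FL: "L \<le> Fx r m ya" using L by (simp add: ya_def)
  have Fpos: "Fx r m ya > 0" using FL L by linarith
  have A0: "A 0 = 1 / Fx r m ya" using A0F Fpos by (simp add: field_simps)
  have "1 / Fx r m ya \<le> 1 / L" by (rule divide_left_mono) (use FL L in auto)
  then have A0b: "\<bar>A 0\<bar> \<le> 1 / L" using A0 Fpos by simp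
  define D where "D = r m * (Fx r (m-1) ya - Fx r m ya)"
  have D: "0 \<le> D" "D \<le> r 1" using bnd by (auto simp: D_def)
  have "\<bar>deriv f a\<bar> = \<bar>A 0\<bar> * D / a"
    unfolding df D_def[symmetric] using D a by (simp add: abs_mult)
  also have "\<dots> \<le> (1 / L) * r 1 / a"
  proof (rule divide_right_mono)
    show "\<bar>A 0\<bar> * D \<le> 1 / L * r 1" by (rule mult_mono[OF A0b D(2)]) (use L D in auto)
  qed (use a in auto)
  finally show ?thesis by (simp add: mult.commute)
qed



theorem mainTheorem7:
  fixes r :: "nat \<Rightarrow> real" and a :: real
  assumes "r 0 = 0" and "strict_mono r" and "filterlim r at_top sequentially"
    and "summable (\<lambda>i. 1 / r (Suc i))"
    and "0 < a" and "a < 1"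
  shows "\<exists>c>0. \<forall>(s::nat) (n::nat) (P::nat \<Rightarrow> real \<Rightarrow> real) (m::nat)
            (B::nat \<Rightarrow> real \<Rightarrow> real) (\<eta>::nat \<Rightarrow> nat \<Rightarrow> real).
           1 \<le> s \<longrightarrow> 1 \<le> n \<longrightarrow> (\<forall>j<s. inE r n (P j)) \<longrightarrow>
           (\<exists>j<s. deriv (P j) a \<noteq> 0) \<longrightarrow> n \<le> m \<longrightarrow>
           CB_basis r m a 1 B \<longrightarrow>
           (\<forall>j<s. \<forall>t>0. P j t = (\<Sum>i\<le>m. B i t * \<eta> i j)) \<longrightarrow>
           supnorm s (\<lambda>j. \<eta> 0 j - \<eta> 1 j) \<ge> supnorm s (\<lambda>j. deriv (P j) a) / c
           \<and> supnorm s (\<lambda>j. deriv (P j) a) / c > 0"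
proof -
  note r0 = assms(1) and sm = assms(2) and summ = assms(4) and a = assms(5,6)
  have pos: "\<And>k. 1 \<le> k \<Longrightarrow> r k > 0" using sm r0 by (metis strict_monoD less_le_trans zero_less_one leI not_le order_le_less)
  have ya: "0 < - ln a" using a by simp
  obtain L where L: "L > 0" "\<And>m. L \<le> Fx r m (- ln a)" using lowerF[OF r0 sm summ ya] by blast
  define c where "c = r 1 / (a * L)"
  have c: "c > 0" using pos[of 1] L a by (simp add: c_def)
  show ?thesis
  proof (rule exI[of _ c], intro conjI c allI impI)
    fix s n :: nat and P :: "nat \<Rightarrow> real \<Rightarrow> real" and m :: nat and B :: "nat \<Rightarrow> real \<Rightarrow> real" and \<eta> :: "nat \<Rightarrow> nat \<Rightarrow> real"
    assume s: "1 \<le> s" and n: "1 \<le> n" and PE: "\<forall>j<s. inE r n (P j)" and ex: "\<exists>j<s. deriv (P j) a \<noteq> 0"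
      and nm: "n \<le> m" and CB: "CB_basis r m a 1 B" and Peq: "\<forall>j<s. \<forall>t>0. P j t = (\<Sum>i\<le>m. B i t * \<eta> i j)"
    have m: "1 \<le> m" using n nm by simp
    have BE: "\<And>k. k \<le> m \<Longrightarrow> inE r m (B k)" using CB by (simp add: CB_basis_def)
    have sum1: "\<And>t. t > 0 \<Longrightarrow> (\<Sum>k\<le>m. B k t) = 1" using CB by (simp add: CB_basis_def)
    have zm: "\<And>k. k \<le> m \<Longrightarrow> zero_mult (B k) a k \<and> zero_mult (B k) 1 (m - k)" using CB by (simp add: CB_basis_def)
    have S01: "{0, 1} \<subseteq> {..m}" using m by auto
    have Ba0: "B k a = 0" if "k \<in> {..m} - {0}" for k
      using zm[of k] that unfolding zero_mult_def by (metis DiffE atMost_iff funpow_0 insertI1 not_gr_zero)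
    have "(\<Sum>k\<le>m. B k a) = (\<Sum>k\<in>{0}. B k a)"
      by (rule sum.mono_neutral_right) (use Ba0 in auto)
    then have Ba: "B 0 a = 1" using sum1[OF a(1)] by simp
    have fz: "\<And>j. j < m \<Longrightarrow> (deriv ^^ j) (B 0) 1 = 0" using zm[of 0] by (simp add: zero_mult_def)
    have dbound: "\<bar>deriv (B 0) a\<bar> \<le> c"
      unfolding c_def by (rule B0_bound[OF r0 sm a L(1) L(2) m BE fz Ba]) simp
    have dB: "\<And>k. k \<le> m \<Longrightarrow> (B k has_real_derivative deriv (B k) a) (at a)"
      using inE_deriv[OF BE a(1)] by blast
    have dB2: "deriv (B k) a = 0" if "k \<in> {..m} - {0, 1}" for k
    proof -
      have "1 < k" "k \<le> m" using that by auto
      then have "(deriv ^^ 1) (B k) a = 0" using zm[of k] unfolding zero_mult_def by blast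
      then show ?thesis by simp
    qed
    have dsum: "((\<lambda>t. \<Sum>k\<le>m. B k t) has_real_derivative (\<Sum>k\<le>m. deriv (B k) a)) (at a)"
      by (intro DERIV_sum dB) auto
    have "((\<lambda>t. \<Sum>k\<le>m. B k t) has_real_derivative 0) (at a)"
    proof (rule has_field_derivative_transform_within_open[of "\<lambda>t. 1" 0 a "{0<..}"])
      show "((\<lambda>t. 1::real) has_real_derivative 0) (at a)" by simp
    qed (use a sum1 in auto)
    then have "(\<Sum>k\<le>m. deriv (B k) a) = 0" using dsum DERIV_unique by blast
    moreover have "(\<Sum>k\<le>m. deriv (B k) a) = (\<Sum>k\<in>{0,1}. deriv (B k) a)"
      by (rule sum.mono_neutral_right) (use S01 dB2 in auto)
    ultimately have dB1: "deriv (B 1) a = - deriv (B 0) a" by simp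
    define d where "d = deriv (B 0) a"
    define v where "v j = \<eta> 0 j - \<eta> 1 j" for j
    have dP: "deriv (P j) a = d * v j" if "j < s" for j
    proof -
      have dh: "((\<lambda>t. \<Sum>k\<le>m. B k t * \<eta> k j) has_real_derivative (\<Sum>k\<le>m. deriv (B k) a * \<eta> k j)) (at a)"
        by (intro DERIV_sum DERIV_cmult_right dB) auto
      have "(P j has_real_derivative (\<Sum>k\<le>m. deriv (B k) a * \<eta> k j)) (at a)"
        by (rule has_field_derivative_transform_within_open[OF dh, of "{0<..}"]) (use a Peq that in auto)
      then have "deriv (P j) a = (\<Sum>k\<le>m. deriv (B k) a * \<eta> k j)" by (rule DERIV_imp_deriv)
      also have "\<dots> = (\<Sum>k\<in>{0,1}. deriv (B k) a * \<eta> k j)"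
        by (rule sum.mono_neutral_right) (use S01 dB2 in auto)
      also have "\<dots> = d * v j" using dB1 by (simp add: d_def v_def algebra_simps)
      finally show ?thesis .
    qed
    have fin: "finite ((\<lambda>j. \<bar>deriv (P j) a\<bar>) ` {..<s})" "(\<lambda>j. \<bar>deriv (P j) a\<bar>) ` {..<s} \<noteq> {}"
      using s by (auto simp: lessThan_empty_iff)
    have finv: "finite ((\<lambda>j. \<bar>v j\<bar>) ` {..<s})" by simp
    obtain j0 where j0: "j0 < s" "deriv (P j0) a \<noteq> 0" using ex by blast
    have "\<bar>deriv (P j0) a\<bar> \<le> supnorm s (\<lambda>j. deriv (P j) a)"
      unfolding supnorm_def by (rule Max_ge[OF fin(1)]) (use j0 in auto)
    then have Ppos: "supnorm s (\<lambda>j. deriv (P j) a) > 0" using j0 by simp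
    have "supnorm s (\<lambda>j. deriv (P j) a) \<le> c * supnorm s v"
      unfolding supnorm_def
    proof (subst Max_le_iff[OF fin], intro ballI)
      fix x assume "x \<in> (\<lambda>j. \<bar>deriv (P j) a\<bar>) ` {..<s}"
      then obtain j where j: "j < s" "x = \<bar>deriv (P j) a\<bar>" by auto
      have vj: "\<bar>v j\<bar> \<le> Max ((\<lambda>j. \<bar>v j\<bar>) ` {..<s})" by (rule Max_ge[OF finv]) (use j in auto)
      have "x = \<bar>d\<bar> * \<bar>v j\<bar>" using j dP by (simp add: abs_mult)
      also have "\<dots> \<le> c * \<bar>v j\<bar>" using dbound by (simp add: d_def mult_right_mono)
      also have "\<dots> \<le> c * Max ((\<lambda>j. \<bar>v j\<bar>) ` {..<s})" using vj c by simp
      finally show "x \<le> c * Max ((\<lambda>j. \<bar>v j\<bar>) ` {..<s})" .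
    qed
    then show "supnorm s (\<lambda>j. deriv (P j) a) / c \<le> supnorm s (\<lambda>j. \<eta> 0 j - \<eta> 1 j)"
      using c by (simp add: pos_divide_le_eq v_def[abs_def] mult.commute)
    show "supnorm s (\<lambda>j. deriv (P j) a) / c > 0" using Ppos c by simp
  qed
qed

end
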